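(* There is a unique family $\{\Lambda_M\}_{M\in\mathcal{M}}$ of bijections $\Lambda_M:\mathcal{B}(M)\to\mathcal{S}_{\mathsf{lex}}(M)$ such that for every $M\in\mathcal{M}$ with nonempty ground set, with $m=m(M)$ the largest element of its ground set, and every $B\in\mathcal{B}(M)$: \begin{align*} \Lambda_M(B)&\subseteq B,\\ \Lambda_M(B)&=\Lambda_{M\backslash m}(B) &&\text{if } m\notin B,\\ \Lambda_M(B)\setminus\{m\}&=\Lambda_{M/m}(B\setminus\{m\}) &&\text{if } m\in B. \end{align*}
   Context: $\mathcal{M}$ is the collection of all matroids whose ground set is a finite subset of $\mathbb{N}$; $\mathcal{B}(M)$ is the set of bases of $M$. For $M$ on ground set $E$, $V_M=\{\mathbf{e}_B : B\in\mathcal{B}(M)\}\subseteq\{0,1\}^E$ ($\mathbf{e}_B$ the characteristic vector), $I(V_M)\subseteq\mathbb{R}[x_e:e\in E]$ its vanishing ideal, and with respect to the lexicographic term order with $x_e\succ x_f$ for $e<f$, the lexicographic standard complex is $\mathcal{S}_{\mathsf{lex}}(M)=\{\tau\subseteq E:\prod_{i\in\tau}x_i\notin \mathrm{in}(I(V_M))\}$. If $E=\emptyset$ then $\mathcal{B}(M)=\mathcal{S}_{\mathsf{lex}}(M)=\{\emptyset\}$. $M\backslash m$, $M/m$ denote deletion and contraction. *)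

theory Defs
  imports Complex_Main "HOL-Library.Poly_Mapping"
begin

type_synonym matroid = "nat set \<times> nat set set"  (* (ground set E, set of bases) *)

definition ground :: "matroid \<Rightarrow> nat set" where "ground M = fst M"
definition bases :: "matroid \<Rightarrow> nat set set" where "bases M = snd M"

definition is_matroid :: "matroid \<Rightarrow> bool" where
  "is_matroid M \<longleftrightarrow> finite (ground M) \<and> bases M \<noteq> {} \<and>
     (\<forall>B\<in>bases M. B \<subseteq> ground M) \<and>
     (\<forall>B1\<in>bases M. \<forall>B2\<in>bases M. \<forall>x\<in>B1 - B2. \<exists>y\<in>B2 - B1. insert y (B1 - {x}) \<in> bases M)"

text \<open>Deletion and contraction of an element m (standard, via bases; loops/coloops handled).\<close>
definition deletion :: "matroid \<Rightarrow> nat \<Rightarrow> matroid" where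
  "deletion M m = (ground M - {m},
     if (\<forall>B\<in>bases M. m \<in> B) then (\<lambda>B. B - {m}) ` bases M
     else {B \<in> bases M. m \<notin> B})"

definition contraction :: "matroid \<Rightarrow> nat \<Rightarrow> matroid" where
  "contraction M m = (ground M - {m},
     if (\<forall>B\<in>bases M. m \<notin> B) then bases M
     else (\<lambda>B. B - {m}) ` {B \<in> bases M. m \<in> B})"

type_synonym monom = "nat \<Rightarrow>\<^sub>0 nat"
type_synonym mpoly = "monom \<Rightarrow>\<^sub>0 real"

definition poly_ring :: "nat set \<Rightarrow> mpoly set" where
  "poly_ring E = {p. \<forall>\<alpha>\<in>Poly_Mapping.keys p. Poly_Mapping.keys \<alpha> \<subseteq> E}"

definition eval_mpoly :: "mpoly \<Rightarrow> (nat \<Rightarrow> real) \<Rightarrow> real" where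
  "eval_mpoly p v = (\<Sum>\<alpha>\<in>Poly_Mapping.keys p. Poly_Mapping.lookup p \<alpha> * (\<Prod>i\<in>Poly_Mapping.keys \<alpha>. v i ^ Poly_Mapping.lookup \<alpha> i))"

definition char_vec :: "nat set \<Rightarrow> nat \<Rightarrow> real" where
  "char_vec B = (\<lambda>i. if i \<in> B then 1 else 0)"

definition vanishing_ideal :: "matroid \<Rightarrow> mpoly set" where
  "vanishing_ideal M = {p \<in> poly_ring (ground M). \<forall>B\<in>bases M. eval_mpoly p (char_vec B) = 0}"

text \<open>Lexicographic order with x_e > x_f for e < f: alpha < beta iff at the smallest
  index where they differ, beta has the larger exponent.\<close>
definition lex_less :: "monom \<Rightarrow> monom \<Rightarrow> bool" where
  "lex_less \<alpha> \<beta> \<longleftrightarrow> (\<exists>i. Poly_Mapping.lookup \<alpha> i < Poly_Mapping.lookup \<beta> i \<and> (\<forall>j<i. Poly_Mapping.lookup \<alpha> j = Poly_Mapping.lookup \<beta> j))"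

definition lead_monom :: "mpoly \<Rightarrow> monom" where
  "lead_monom p = (THE \<alpha>. \<alpha> \<in> Poly_Mapping.keys p \<and> (\<forall>\<beta>\<in>Poly_Mapping.keys p. \<beta> \<noteq> \<alpha> \<longrightarrow> lex_less \<beta> \<alpha>))"

definition monomial_poly :: "monom \<Rightarrow> mpoly" where
  "monomial_poly \<alpha> = Poly_Mapping.single \<alpha> 1"

definition ideal_gen :: "nat set \<Rightarrow> mpoly set \<Rightarrow> mpoly set" where
  "ideal_gen E G = {(\<Sum>g\<in>T. r g * g) | T r. finite T \<and> T \<subseteq> G \<and> (\<forall>g\<in>T. r g \<in> poly_ring E)}"

definition initial_ideal :: "nat set \<Rightarrow> mpoly set \<Rightarrow> mpoly set" where
  "initial_ideal E I = ideal_gen E {monomial_poly (lead_monom f) | f. f \<in> I \<and> f \<noteq> 0}"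

definition sqfree_monom :: "nat set \<Rightarrow> monom" where
  "sqfree_monom \<tau> = (\<Sum>i\<in>\<tau>. Poly_Mapping.single i 1)"

definition S_lex :: "matroid \<Rightarrow> nat set set" where
  "S_lex M = {\<tau>. \<tau> \<subseteq> ground M \<and>
      monomial_poly (sqfree_monom \<tau>) \<notin> initial_ideal (ground M) (vanishing_ideal M)}"

definition good_family :: "(matroid \<Rightarrow> nat set \<Rightarrow> nat set) \<Rightarrow> bool" where
  "good_family \<Lambda> \<longleftrightarrow> (\<forall>M. is_matroid M \<longrightarrow>
     bij_betw (\<Lambda> M) (bases M) (S_lex M) \<and>
     (ground M \<noteq> {} \<longrightarrow> (let m = Max (ground M) in \<forall>B\<in>bases M.
         \<Lambda> M B \<subseteq> B \<and>
         (m \<notin> B \<longrightarrow> \<Lambda> M B = \<Lambda> (deletion M m) B) \<and>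
         (m \<in> B \<longrightarrow> \<Lambda> M B - {m} = \<Lambda> (contraction M m) (B - {m})))))"

end

theory Submission
  imports Defs
begin


definition ind :: "nat set \<Rightarrow> nat set \<Rightarrow> real" where
  "ind \<rho> B = (if \<rho> \<subseteq> B then 1 else 0)"

definition slt :: "nat set \<Rightarrow> nat set \<Rightarrow> bool" where
  "slt \<rho> \<sigma> \<longleftrightarrow> (\<exists>i. i \<in> \<sigma> \<and> i \<notin> \<rho> \<and> (\<forall>j<i. j \<in> \<rho> \<longleftrightarrow> j \<in> \<sigma>))"

inductive_set spn :: "(nat set \<Rightarrow> bool) \<Rightarrow> (nat set \<Rightarrow> real) set" for P where
  spn0: "(\<lambda>B. 0) \<in> spn P"
| spnS: "f \<in> spn P \<Longrightarrow> P \<rho> \<Longrightarrow> (\<lambda>B. f B + c * ind \<rho> B) \<in> spn P"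

definition dep :: "nat set set \<Rightarrow> nat set \<Rightarrow> bool" where
  "dep Y \<sigma> \<longleftrightarrow> (\<exists>f\<in>spn (\<lambda>\<rho>. slt \<rho> \<sigma>). \<forall>B\<in>Y. ind \<sigma> B = f B)"

definition St :: "nat set set \<Rightarrow> nat set set" where
  "St Y = {\<tau>. \<not> dep Y \<tau>}"

lemma spn_add: "g \<in> spn P \<Longrightarrow> f \<in> spn P \<Longrightarrow> (\<lambda>B. f B + g B) \<in> spn P"
proof (induction g rule: spn.induct)
  case spn0 then show ?case by simp
next
  case (spnS g \<rho> c)
  have "(\<lambda>B. (f B + g B) + c * ind \<rho> B) \<in> spn P" using spnS by (intro spn.spnS) auto
  then show ?case by (simp add: add.assoc)
qed

lemma spn_scale: "f \<in> spn P \<Longrightarrow> (\<lambda>B. d * f B) \<in> spn P"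
proof (induction f rule: spn.induct)
  case spn0 then show ?case by (simp add: spn.spn0)
next
  case (spnS f \<rho> c)
  have "(\<lambda>B. d * f B + (d * c) * ind \<rho> B) \<in> spn P" using spnS by (intro spn.spnS) auto
  then show ?case by (simp add: algebra_simps)
qed

lemma spn_ind: "P \<rho> \<Longrightarrow> (\<lambda>B. c * ind \<rho> B) \<in> spn P"
  using spn.spnS[OF spn.spn0, of P \<rho> c] by simp

lemma spn_mono: "f \<in> spn P \<Longrightarrow> (\<And>\<rho>. P \<rho> \<Longrightarrow> Q \<rho>) \<Longrightarrow> f \<in> spn Q"
  by (induction f rule: spn.induct) (auto intro: spn.intros)

lemma spn_diff: "f \<in> spn P \<Longrightarrow> g \<in> spn P \<Longrightarrow> (\<lambda>B. f B - g B) \<in> spn P"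
  using spn_add[OF spn_scale[of g P "-1"], of f] by simp

lemma spn_sum: "finite K \<Longrightarrow> (\<And>k. k \<in> K \<Longrightarrow> P (h k)) \<Longrightarrow>
   (\<lambda>B. \<Sum>k\<in>K. d k * ind (h k) B) \<in> spn P"
proof (induction K rule: finite_induct)
  case empty then show ?case by (simp add: spn.spn0)
next
  case (insert x F)
  have "(\<lambda>B. (\<Sum>k\<in>F. d k * ind (h k) B) + d x * ind (h x) B) \<in> spn P"
    using insert by (intro spn.spnS) auto
  then show ?case using insert by (simp add: add.commute)
qed

lemma spn_ins: "f \<in> spn P \<Longrightarrow> (\<lambda>B. f (insert m B)) \<in> spn (\<lambda>\<rho>'. \<exists>\<rho>. P \<rho> \<and> \<rho>' = \<rho> - {m})"
proof (induction f rule: spn.induct)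
  case spn0 then show ?case by (simp add: spn.spn0)
next
  case (spnS f \<rho> c)
  have e: "ind \<rho> (insert m B) = ind (\<rho> - {m}) B" for B by (auto simp: ind_def)
  show ?case unfolding e using spnS by (intro spn.spnS) auto
qed

lemma spn_cond: "f \<in> spn P \<Longrightarrow>
   (\<lambda>B. if m \<in> B then f (B - {m}) else 0) \<in> spn (\<lambda>\<rho>'. \<exists>\<rho>. P \<rho> \<and> \<rho>' = insert m \<rho>)"
proof (induction f rule: spn.induct)
  case spn0 then show ?case by (simp add: spn.spn0)
next
  case (spnS f \<rho> c)
  define c' where "c' = (if m \<in> \<rho> then 0 else c)"
  have e: "(if m \<in> B then f (B - {m}) + c * ind \<rho> (B - {m}) else 0) =
       (if m \<in> B then f (B - {m}) else 0) + c' * ind (insert m \<rho>) B" for B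
    by (auto simp: ind_def c'_def)
  show ?case unfolding e using spnS by (intro spn.spnS) auto
qed

lemma spn_notm: "f \<in> spn P \<Longrightarrow>
   (\<lambda>B. if m \<in> B then 0 else f B) \<in> spn (\<lambda>\<rho>'. \<exists>\<rho>. P \<rho> \<and> (\<rho>' = \<rho> \<or> \<rho>' = insert m \<rho>))"
proof (induction f rule: spn.induct)
  case spn0 then show ?case by (simp add: spn.spn0)
next
  case (spnS f \<rho> c)
  have e: "(if m \<in> B then 0 else f B + c * ind \<rho> B) =
       ((if m \<in> B then 0 else f B) + c * ind \<rho> B) + (- c) * ind (insert m \<rho>) B" for B
    by (auto simp: ind_def)
  show ?case unfolding e using spnS by (intro spn.spnS) auto
qed

lemma spn_mul: "f \<in> spn P \<Longrightarrow>
   (\<lambda>B. ind D B * f B) \<in> spn (\<lambda>\<rho>'. \<exists>\<rho>. P \<rho> \<and> \<rho>' = \<rho> \<union> D)"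
proof (induction f rule: spn.induct)
  case spn0 then show ?case by (simp add: spn.spn0)
next
  case (spnS f \<rho> c)
  have e: "ind D B * (f B + c * ind \<rho> B) = ind D B * f B + c * ind (\<rho> \<union> D) B" for B
    by (auto simp: ind_def)
  show ?case unfolding e using spnS by (intro spn.spnS) auto
qed

lemma slt_irrefl: "\<not> slt \<sigma> \<sigma>" by (auto simp: slt_def)

lemma slt_union: "slt \<rho> \<sigma> \<Longrightarrow> D \<inter> \<sigma> = {} \<Longrightarrow> slt (\<rho> \<union> D) (\<sigma> \<union> D)"
  unfolding slt_def by (metis IntI Un_iff empty_iff)

lemma slt_lt_m: "slt \<rho> a \<Longrightarrow> \<forall>x\<in>a. x < m \<Longrightarrow>
  \<exists>i. i \<in> a \<and> i \<notin> \<rho> \<and> i < m \<and> (\<forall>j<i. j \<in> \<rho> \<longleftrightarrow> j \<in> a)"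
  unfolding slt_def by blast

lemma slt_minus_m: "slt \<rho> a \<Longrightarrow> \<forall>x\<in>a. x < m \<Longrightarrow> slt (\<rho> - {m}) a"
  apply (drule (1) slt_lt_m) unfolding slt_def
  by (metis Diff_iff order_less_trans less_irrefl singletonD)

lemma slt_ins_m: "slt \<rho> a \<Longrightarrow> \<forall>x\<in>a. x < m \<Longrightarrow> slt (insert m \<rho>) a"
  apply (drule (1) slt_lt_m) unfolding slt_def
  by (metis insert_iff order_less_trans less_irrefl)

lemma slt_ins_ins: "slt \<rho> a \<Longrightarrow> \<forall>x\<in>a. x < m \<Longrightarrow> slt (insert m \<rho>) (insert m a)"
  apply (drule (1) slt_lt_m) unfolding slt_def
  by (metis insert_iff order_less_trans less_irrefl)

lemma slt_ins_r: "slt \<rho> a \<Longrightarrow> \<forall>x\<in>a. x < m \<Longrightarrow> slt \<rho> (insert m a)"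
  apply (drule (1) slt_lt_m) unfolding slt_def
  by (metis insert_iff order_less_trans less_irrefl)

lemma slt_self_ins: "m \<notin> a \<Longrightarrow> slt a (insert m a)"
  unfolding slt_def by (rule exI[of _ m]) auto

lemma slt_ins_cases: "slt \<rho> (insert m a) \<Longrightarrow> m \<notin> a \<Longrightarrow> \<forall>x\<in>a. x < m \<Longrightarrow>
   slt \<rho> a \<or> (m \<notin> \<rho> \<and> (\<forall>j<m. j \<in> \<rho> \<longleftrightarrow> j \<in> a))"
  unfolding slt_def by (metis insert_iff less_irrefl order_less_trans)

lemma dep_triv: "(\<forall>B\<in>Y. \<not> \<sigma> \<subseteq> B) \<Longrightarrow> dep Y \<sigma>"
  unfolding dep_def by (auto simp: ind_def intro!: bexI[OF _ spn.spn0])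

lemma dep_subset: "dep Y \<sigma> \<Longrightarrow> Y' \<subseteq> Y \<Longrightarrow> dep Y' \<sigma>"
  unfolding dep_def by blast

lemma dep_up: "dep Y \<sigma> \<Longrightarrow> \<sigma> \<subseteq> \<tau> \<Longrightarrow> dep Y \<tau>"
proof -
  assume d: "dep Y \<sigma>" and s: "\<sigma> \<subseteq> \<tau>"
  then obtain f where f: "f \<in> spn (\<lambda>\<rho>. slt \<rho> \<sigma>)" "\<forall>B\<in>Y. ind \<sigma> B = f B"
    unfolding dep_def by blast
  define D where "D = \<tau> - \<sigma>"
  have t: "\<tau> = \<sigma> \<union> D" "D \<inter> \<sigma> = {}" using s by (auto simp: D_def)
  have "(\<lambda>B. ind D B * f B) \<in> spn (\<lambda>\<rho>. slt \<rho> \<tau>)"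
    by (rule spn_mono[OF spn_mul[OF f(1)]]) (use t slt_union in auto)
  moreover have "\<forall>B\<in>Y. ind \<tau> B = ind D B * f B"
  proof
    fix B assume "B \<in> Y"
    have "ind \<tau> B = ind D B * ind \<sigma> B" unfolding t(1) by (auto simp: ind_def)
    then show "ind \<tau> B = ind D B * f B" using f(2) \<open>B \<in> Y\<close> by simp
  qed
  ultimately show ?thesis unfolding dep_def by (intro bexI[where x="\<lambda>B. ind D B * f B"])
qed

lemma spn_split:
  assumes "f \<in> spn (\<lambda>\<rho>. slt \<rho> (insert m a))" "m \<notin> a" "\<forall>x\<in>a. x < m"
  shows "\<exists>g\<in>spn (\<lambda>\<rho>. slt \<rho> a). \<exists>k. \<forall>B. (\<forall>x\<in>B. x \<le> m) \<longrightarrow> f B = g B + k * ind a B"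
  using assms(1)
proof (induction f rule: spn.induct)
  case spn0
  show ?case by (rule bexI[OF _ spn.spn0]) (rule exI[of _ 0], simp)
next
  case (spnS f \<rho> c)
  then obtain g k where g: "g \<in> spn (\<lambda>\<rho>. slt \<rho> a)"
    and gk: "\<forall>B. (\<forall>x\<in>B. x \<le> m) \<longrightarrow> f B = g B + k * ind a B" by blast
  from slt_ins_cases[OF spnS(2) assms(2,3)] show ?case
  proof
    assume "slt \<rho> a"
    then show ?thesis using gk
      by (intro bexI[OF _ spn.spnS[OF g]] exI[of _ k]) auto
  next
    assume r: "m \<notin> \<rho> \<and> (\<forall>j<m. j \<in> \<rho> \<longleftrightarrow> j \<in> a)"
    show ?thesis
    proof (cases "\<rho> = a")
      case True
      then show ?thesis using gk g
        by (intro bexI[OF _ g] exI[of _ "k + c"]) (auto simp: algebra_simps)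
    next
      case False
      then obtain x where x: "x \<in> \<rho>" "m < x"
        using r assms(3) by (metis linorder_neqE_nat set_eq_iff order_less_trans)
      then have "\<forall>B. (\<forall>x\<in>B. x \<le> m) \<longrightarrow> ind \<rho> B = 0"
        by (auto simp: ind_def) (meson leD subset_iff)
      then show ?thesis using gk g
        by (intro bexI[OF _ g] exI[of _ k]) auto
    qed
  qed
qed
lemma dep_rec:
  assumes hX: "\<forall>B\<in>X. \<forall>x\<in>B. x \<le> m"
    and A: "A = {B\<in>X. m \<notin> B}" and C: "C = (\<lambda>B. B - {m}) ` {B\<in>X. m \<in> B}"
    and ma: "m \<notin> a"
  shows "dep X a \<longleftrightarrow> dep A a \<and> dep C a"
    and "dep X (insert m a) \<longleftrightarrow> dep A a \<or> dep C a"
proof -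
  have hA: "\<forall>B\<in>A. \<forall>x\<in>B. x \<le> m" and hC: "\<forall>B\<in>C. \<forall>x\<in>B. x \<le> m"
    using hX by (auto simp: A C)
  have CX: "insert m B' \<in> X" if "B' \<in> C" for B'
    using that by (auto simp: C insert_absorb)
  have XC: "B - {m} \<in> C" if "B \<in> X" "m \<in> B" for B
    using that by (auto simp: C)
  have XA: "B \<in> A" if "B \<in> X" "m \<notin> B" for B
    using that by (auto simp: A)
  have mC: "m \<notin> B'" if "B' \<in> C" for B' using that by (auto simp: C)
  show "dep X a \<longleftrightarrow> dep A a \<and> dep C a"
       "dep X (insert m a) \<longleftrightarrow> dep A a \<or> dep C a"
  proof -
    consider "\<forall>x\<in>a. x < m" | x where "x \<in> a" "m < x"
      using ma by (metis linorder_neqE_nat)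
    then have "(dep X a \<longleftrightarrow> dep A a \<and> dep C a) \<and>
       (dep X (insert m a) \<longleftrightarrow> dep A a \<or> dep C a)"
    proof cases
      case 2
      have "\<forall>B\<in>Y. \<not> a \<subseteq> B" if "\<forall>B\<in>Y. \<forall>x\<in>B. x \<le> m" for Y
        using that 2 by (meson leD subsetD)
      then have "dep X a" "dep A a" "dep C a" "dep X (insert m a)"
        using hX hA hC by (auto intro!: dep_triv)
      then show ?thesis by simp
    next
      case 1
      note am = 1
      have e1: "ind a B = ind a (B - {m})" "ind a (insert m B) = ind a B" for B
        using ma by (auto simp: ind_def)
      have e2: "ind (insert m a) B = (if m \<in> B then ind a (B - {m}) else 0)" for B
        using ma by (auto simp: ind_def)
      have p1: "dep X a \<longleftrightarrow> dep A a \<and> dep C a"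
      proof
        assume d: "dep X a"
        then obtain f where f: "f \<in> spn (\<lambda>\<rho>. slt \<rho> a)" "\<forall>B\<in>X. ind a B = f B"
          unfolding dep_def by blast
        have "dep A a" using d by (rule dep_subset) (auto simp: A)
        moreover have "dep C a" unfolding dep_def
        proof (intro bexI[where x="\<lambda>B. f (insert m B)"] ballI)
          show "(\<lambda>B. f (insert m B)) \<in> spn (\<lambda>\<rho>. slt \<rho> a)"
            by (rule spn_mono[OF spn_ins[OF f(1)]]) (use am slt_minus_m in auto)
          fix B assume "B \<in> C"
          then show "ind a B = f (insert m B)" using f(2) CX e1 by metis
        qed
        ultimately show "dep A a \<and> dep C a" ..
      next
        assume "dep A a \<and> dep C a"
        then obtain fA fC where fA: "fA \<in> spn (\<lambda>\<rho>. slt \<rho> a)" "\<forall>B\<in>A. ind a B = fA B"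
          and fC: "fC \<in> spn (\<lambda>\<rho>. slt \<rho> a)" "\<forall>B\<in>C. ind a B = fC B"
          unfolding dep_def by blast
        have s1: "(\<lambda>B. if m \<in> B then 0 else fA B) \<in> spn (\<lambda>\<rho>. slt \<rho> a)"
          by (rule spn_mono[OF spn_notm[OF fA(1)]]) (use am slt_ins_m in auto)
        have s2: "(\<lambda>B. if m \<in> B then fC (B - {m}) else 0) \<in> spn (\<lambda>\<rho>. slt \<rho> a)"
          by (rule spn_mono[OF spn_cond[OF fC(1)]]) (use am slt_ins_m in auto)
        show "dep X a" unfolding dep_def
        proof (intro bexI[OF _ spn_add[OF s2 s1]] ballI)
          fix B assume B: "B \<in> X"
          show "ind a B = (if m \<in> B then 0 else fA B) + (if m \<in> B then fC (B - {m}) else 0)"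
          proof (cases "m \<in> B")
            case True then show ?thesis using fC(2) XC[OF B True] e1(1)[of B] by simp
          next
            case False then show ?thesis using fA(2) XA[OF B] by simp
          qed
        qed
      qed
      have p2: "dep X (insert m a) \<longleftrightarrow> dep A a \<or> dep C a"
      proof
        assume "dep X (insert m a)"
        then obtain f where f: "f \<in> spn (\<lambda>\<rho>. slt \<rho> (insert m a))"
            "\<forall>B\<in>X. ind (insert m a) B = f B"
          unfolding dep_def by blast
        obtain g k where g: "g \<in> spn (\<lambda>\<rho>. slt \<rho> a)"
          and gk: "\<forall>B. (\<forall>x\<in>B. x \<le> m) \<longrightarrow> f B = g B + k * ind a B"
          using spn_split[OF f(1) ma am] by blast
        show "dep A a \<or> dep C a"
        proof (cases "k = 1")
          case True
          have "dep A a" unfolding dep_def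
          proof (intro bexI[OF _ spn_scale[OF g, of "-1"]] ballI)
            fix B assume B: "B \<in> A"
            then have "B \<in> X" "m \<notin> B" by (auto simp: A)
            then have "f B = g B + k * ind a B" using gk hX by blast
            moreover have "f B = ind (insert m a) B" using f(2) \<open>B \<in> X\<close> by simp
            moreover have "ind (insert m a) B = 0" using e2[of B] \<open>m \<notin> B\<close> by simp
            ultimately have "0 = g B + ind a B" using True by simp
            then show "ind a B = - 1 * g B" by simp
          qed
          then show ?thesis ..
        next
          case False
          have "dep C a" unfolding dep_def
          proof (intro bexI[OF _ spn_scale[of "\<lambda>B. g (insert m B)" _ "1 / (1 - k)"]] ballI)
            show "(\<lambda>B. g (insert m B)) \<in> spn (\<lambda>\<rho>. slt \<rho> a)"
              by (rule spn_mono[OF spn_ins[OF g]]) (use am slt_minus_m in auto)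
            fix B assume B: "B \<in> C"
            have X': "insert m B \<in> X" using CX[OF B] .
            have "f (insert m B) = g (insert m B) + k * ind a (insert m B)"
              using gk hX X' by blast
            moreover have "f (insert m B) = ind (insert m a) (insert m B)"
              using f(2) X' by simp
            moreover have "ind (insert m a) (insert m B) = ind a B"
              using e2[of "insert m B"] mC[OF B] by simp
            ultimately have "ind a B = g (insert m B) + k * ind a B" using e1(2)[of B] by simp
            then have "(1 - k) * ind a B = g (insert m B)" by (simp add: algebra_simps)
            then show "ind a B = 1 / (1 - k) * g (insert m B)" using False
              by (simp add: field_simps)
          qed
          then show ?thesis ..
        qed
      next
        assume "dep A a \<or> dep C a"
        then show "dep X (insert m a)"
        proof
          assume "dep A a"
          then obtain fA where fA: "fA \<in> spn (\<lambda>\<rho>. slt \<rho> a)" "\<forall>B\<in>A. ind a B = fA B"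
            unfolding dep_def by blast
          have s1: "(\<lambda>B. if m \<in> B then 0 else fA B) \<in> spn (\<lambda>\<rho>. slt \<rho> (insert m a))"
            by (rule spn_mono[OF spn_notm[OF fA(1)]]) (use am slt_ins_ins slt_ins_r in auto)
          have s0: "(\<lambda>B. 1 * ind a B) \<in> spn (\<lambda>\<rho>. slt \<rho> (insert m a))"
            by (rule spn_ind) (rule slt_self_ins[OF ma])
          show ?thesis unfolding dep_def
          proof (intro bexI[OF _ spn_diff[OF s0 s1]] ballI)
            fix B assume B: "B \<in> X"
            show "ind (insert m a) B = 1 * ind a B - (if m \<in> B then 0 else fA B)"
            proof (cases "m \<in> B")
              case True then show ?thesis by (auto simp: ind_def)
            next
              case False then show ?thesis using fA(2) XA[OF B] by (auto simp: ind_def)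
            qed
          qed
        next
          assume "dep C a"
          then obtain fC where fC: "fC \<in> spn (\<lambda>\<rho>. slt \<rho> a)" "\<forall>B\<in>C. ind a B = fC B"
            unfolding dep_def by blast
          have s2: "(\<lambda>B. if m \<in> B then fC (B - {m}) else 0) \<in> spn (\<lambda>\<rho>. slt \<rho> (insert m a))"
            by (rule spn_mono[OF spn_cond[OF fC(1)]]) (use am slt_ins_ins in auto)
          show ?thesis unfolding dep_def
          proof (intro bexI[OF _ s2] ballI)
            fix B assume B: "B \<in> X"
            show "ind (insert m a) B = (if m \<in> B then fC (B - {m}) else 0)"
              using e2 fC(2) XC[OF B] by simp
          qed
        qed
      qed
      show ?thesis using p1 p2 by blast
    qed
    then show "dep X a \<longleftrightarrow> dep A a \<and> dep C a"
       "dep X (insert m a) \<longleftrightarrow> dep A a \<or> dep C a" by blast+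
  qed
qed

lemma St_nom: "\<forall>B\<in>Y. m \<notin> B \<Longrightarrow> \<tau> \<in> St Y \<Longrightarrow> m \<notin> \<tau>"
  unfolding St_def using dep_triv by blast

lemma St_empty: "St {} = {}"
  unfolding St_def using dep_triv by blast

lemma St_rec:
  assumes hX: "\<forall>B\<in>X. \<forall>x\<in>B. x \<le> m"
    and A: "A = {B\<in>X. m \<notin> B}" and C: "C = (\<lambda>B. B - {m}) ` {B\<in>X. m \<in> B}"
  shows "m \<notin> a \<Longrightarrow> a \<in> St X \<longleftrightarrow> a \<in> St A \<or> a \<in> St C"
    and "m \<notin> a \<Longrightarrow> insert m a \<in> St X \<longleftrightarrow> a \<in> St A \<and> a \<in> St C"
  using dep_rec[OF assms] unfolding St_def by auto


lemma bij_rec: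
  assumes hX: "\<forall>B\<in>X. \<forall>x\<in>B. x \<le> m"
    and A: "A = {B\<in>X. m \<notin> B}" and C: "C = (\<lambda>B. B - {m}) ` {B\<in>X. m \<in> B}"
    and L1: "bij_betw L1 A (St A)" and L2: "bij_betw L2 C (St C)"
    and L: "\<And>B. B \<in> X \<Longrightarrow> L B = (if m \<notin> B then L1 B else
        (if insert m (L2 (B - {m})) \<in> St X then insert m (L2 (B - {m})) else L2 (B - {m})))"
  shows "bij_betw L X (St X)"
proof -
  have nA: "m \<notin> t" if "t \<in> St A" for t
    using St_nom[of A m t] that by (auto simp: A)
  have nC: "m \<notin> t" if "t \<in> St C" for t
    using St_nom[of C m t] that by (auto simp: C)
  note R1 = St_rec(1)[OF hX A C] and R2 = St_rec(2)[OF hX A C]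
  have CX: "insert m B' \<in> X" if "B' \<in> C" for B'
    using that by (auto simp: C insert_absorb)
  have XC: "B - {m} \<in> C" if "B \<in> X" "m \<in> B" for B
    using that by (auto simp: C)
  have XA: "B \<in> A" if "B \<in> X" "m \<notin> B" for B
    using that by (auto simp: A)
  have mC: "m \<notin> B'" if "B' \<in> C" for B' using that by (auto simp: C)
  have L1S: "L1 B \<in> St A" if "B \<in> A" for B using L1 that by (auto simp: bij_betw_def)
  have L2S: "L2 B \<in> St C" if "B \<in> C" for B using L2 that by (auto simp: bij_betw_def)
  have phi: "insert m t \<in> St X \<longleftrightarrow> t \<in> St A" if "t \<in> St C" for t
    using R2[OF nC[OF that]] that by blast
  have inj: "inj_on L X"
  proof (rule inj_onI)
    fix B1 B2 assume B1: "B1 \<in> X" and B2: "B2 \<in> X" and eq: "L B1 = L B2"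
    show "B1 = B2"
    proof (cases "m \<in> B1"; cases "m \<in> B2")
      assume m1: "m \<in> B1" and m2: "m \<in> B2"
      define t1 where "t1 = L2 (B1 - {m})"
      define t2 where "t2 = L2 (B2 - {m})"
      have t: "t1 \<in> St C" "t2 \<in> St C" using L2S XC B1 B2 m1 m2 by (auto simp: t1_def t2_def)
      have "t1 = t2"
        using eq L[OF B1] L[OF B2] m1 m2 nC[OF t(1)] nC[OF t(2)]
        unfolding t1_def[symmetric] t2_def[symmetric]
        by (auto split: if_splits)
      then have "B1 - {m} = B2 - {m}"
        using L2 XC B1 B2 m1 m2 by (auto simp: t1_def t2_def bij_betw_def dest: inj_onD)
      then show ?thesis using m1 m2 by (metis insert_Diff)
    next
      assume m1: "m \<in> B1" and m2: "m \<notin> B2"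
      define t1 where "t1 = L2 (B1 - {m})"
      have t: "t1 \<in> St C" using L2S XC B1 m1 by (auto simp: t1_def)
      have s: "L1 B2 \<in> St A" using L1S XA B2 m2 by auto
      show ?thesis using eq L[OF B1] L[OF B2] m1 m2 nA[OF s] phi[OF t] s
        unfolding t1_def[symmetric] by (auto split: if_splits)
    next
      assume m1: "m \<notin> B1" and m2: "m \<in> B2"
      define t2 where "t2 = L2 (B2 - {m})"
      have t: "t2 \<in> St C" using L2S XC B2 m2 by (auto simp: t2_def)
      have s: "L1 B1 \<in> St A" using L1S XA B1 m1 by auto
      show ?thesis using eq L[OF B1] L[OF B2] m1 m2 nA[OF s] phi[OF t] s
        unfolding t2_def[symmetric] by (auto split: if_splits)
    next
      assume m1: "m \<notin> B1" and m2: "m \<notin> B2"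
      then show ?thesis using eq L[OF B1] L[OF B2] L1 XA B1 B2
        by (auto simp: bij_betw_def dest: inj_onD)
    qed
  qed
  have sub: "L ` X \<subseteq> St X"
  proof
    fix y assume "y \<in> L ` X"
    then obtain B where B: "B \<in> X" and y: "y = L B" by blast
    show "y \<in> St X"
    proof (cases "m \<in> B")
      case True
      define t where "t = L2 (B - {m})"
      have t: "t \<in> St C" using L2S XC B True by (auto simp: t_def)
      show ?thesis using y L[OF B] True R1[OF nC[OF t]] t unfolding t_def[symmetric]
        by auto
    next
      case False
      have s: "L1 B \<in> St A" using L1S XA B False by auto
      show ?thesis using y L[OF B] False R1[OF nA[OF s]] s by auto
    qed
  qed
  have sup: "St X \<subseteq> L ` X"
  proof
    fix \<tau> assume \<tau>: "\<tau> \<in> St X"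
    show "\<tau> \<in> L ` X"
    proof (cases "m \<in> \<tau>")
      case True
      define a where "a = \<tau> - {m}"
      have ma: "m \<notin> a" and ta: "\<tau> = insert m a" using True by (auto simp: a_def)
      have aa: "a \<in> St A" "a \<in> St C" using R2[OF ma] \<tau> ta by auto
      then obtain B' where B': "B' \<in> C" "a = L2 B'" using L2 by (auto simp: bij_betw_def)
      have X': "insert m B' \<in> X" using CX[OF B'(1)] .
      have e: "insert m B' - {m} = B'" using mC[OF B'(1)] by simp
      have "L (insert m B') = \<tau>" using L[OF X'] e B'(2)[symmetric] \<tau> ta by simp
      then show ?thesis using X' by (metis image_eqI)
    next
      case False
      then have "\<tau> \<in> St A \<or> \<tau> \<in> St C" using R1 \<tau> by blast
      then show ?thesis
      proof (cases "\<tau> \<in> St A")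
        case True
        then obtain B where B: "B \<in> A" "\<tau> = L1 B" using L1 by (auto simp: bij_betw_def)
        then have "B \<in> X" "m \<notin> B" by (auto simp: A)
        then have "L B = \<tau>" using L B by simp
        then show ?thesis using \<open>B \<in> X\<close> by (metis image_eqI)
      next
        case nt: False
        then have tc: "\<tau> \<in> St C" using \<open>\<tau> \<in> St A \<or> \<tau> \<in> St C\<close> by blast
        then obtain B' where B': "B' \<in> C" "\<tau> = L2 B'" using L2 by (auto simp: bij_betw_def)
        have X': "insert m B' \<in> X" using CX[OF B'(1)] .
        have e: "insert m B' - {m} = B'" using mC[OF B'(1)] by simp
        have "insert m \<tau> \<notin> St X" using phi[OF tc] nt by blast
        then have "L (insert m B') = \<tau>" using L[OF X'] e B'(2)[symmetric] by simp
        then show ?thesis using X' by (metis image_eqI)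
      qed
    qed
  qed
  show ?thesis using inj sub sup by (auto simp: bij_betw_def)
qed



lemma lex_irrefl: "\<not> lex_less \<alpha> \<alpha>" by (auto simp: lex_less_def)

lemma lex_trans: "lex_less \<alpha> \<beta> \<Longrightarrow> lex_less \<beta> \<gamma> \<Longrightarrow> lex_less \<alpha> \<gamma>"
  unfolding lex_less_def by (metis linorder_neqE_nat order_less_trans)

lemma lex_total: "\<alpha> \<noteq> \<beta> \<Longrightarrow> lex_less \<alpha> \<beta> \<or> lex_less \<beta> \<alpha>"
proof -
  assume "\<alpha> \<noteq> \<beta>"
  have ex: "\<exists>i. Poly_Mapping.lookup \<alpha> i \<noteq> Poly_Mapping.lookup \<beta> i"
  proof (rule ccontr)
    assume "\<not> (\<exists>i. Poly_Mapping.lookup \<alpha> i \<noteq> Poly_Mapping.lookup \<beta> i)"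
    then have "\<alpha> = \<beta>" by (intro poly_mapping_eqI) auto
    then show False using \<open>\<alpha> \<noteq> \<beta>\<close> by simp
  qed
  define i where "i = (LEAST i. Poly_Mapping.lookup \<alpha> i \<noteq> Poly_Mapping.lookup \<beta> i)"
  have i: "Poly_Mapping.lookup \<alpha> i \<noteq> Poly_Mapping.lookup \<beta> i"
    unfolding i_def by (rule LeastI_ex[OF ex])
  have j: "\<forall>j<i. Poly_Mapping.lookup \<alpha> j = Poly_Mapping.lookup \<beta> j"
    unfolding i_def using not_less_Least by blast
  have "Poly_Mapping.lookup \<alpha> i < Poly_Mapping.lookup \<beta> i \<or> Poly_Mapping.lookup \<beta> i < Poly_Mapping.lookup \<alpha> i"
    using i by linarith
  then show ?thesis
  proof
    assume "Poly_Mapping.lookup \<alpha> i < Poly_Mapping.lookup \<beta> i"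
    then have "lex_less \<alpha> \<beta>" unfolding lex_less_def using j by blast
    then show ?thesis ..
  next
    assume "Poly_Mapping.lookup \<beta> i < Poly_Mapping.lookup \<alpha> i"
    then have "lex_less \<beta> \<alpha>" unfolding lex_less_def using j by (intro exI[of _ i]) auto
    then show ?thesis ..
  qed
qed

lemma ex_lex_max: "finite K \<Longrightarrow> K \<noteq> {} \<Longrightarrow> \<exists>\<alpha>\<in>K. \<forall>\<beta>\<in>K. \<beta> \<noteq> \<alpha> \<longrightarrow> lex_less \<beta> \<alpha>"
proof (induction K rule: finite_ne_induct)
  case (singleton x) then show ?case by simp
next
  case (insert x F)
  then obtain \<alpha> where a: "\<alpha> \<in> F" "\<forall>\<beta>\<in>F. \<beta> \<noteq> \<alpha> \<longrightarrow> lex_less \<beta> \<alpha>" by blast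
  show ?case
  proof (cases "lex_less \<alpha> x")
    case True
    have "\<forall>\<beta>\<in>insert x F. \<beta> \<noteq> x \<longrightarrow> lex_less \<beta> x"
    proof (intro ballI impI)
      fix \<beta> assume "\<beta> \<in> insert x F" "\<beta> \<noteq> x"
      then have "\<beta> \<in> F" by simp
      then show "lex_less \<beta> x"
        using a(2) True lex_trans[of \<beta> \<alpha> x] by (cases "\<beta> = \<alpha>") simp_all
    qed
    then show ?thesis by blast
  next
    case False
    have "x \<noteq> \<alpha>" using a(1) insert by blast
    then have "lex_less x \<alpha>" using lex_total False by blast
    then have "\<forall>\<beta>\<in>insert x F. \<beta> \<noteq> \<alpha> \<longrightarrow> lex_less \<beta> \<alpha>" using a(2) by simp
    then show ?thesis using a(1) by blast
  qed
qed

lemma lead_monomI: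
  assumes "\<alpha> \<in> Poly_Mapping.keys f" "\<forall>\<beta>\<in>Poly_Mapping.keys f. \<beta> \<noteq> \<alpha> \<longrightarrow> lex_less \<beta> \<alpha>"
  shows "lead_monom f = \<alpha>"
  unfolding lead_monom_def
proof (rule the_equality)
  show "\<alpha> \<in> Poly_Mapping.keys f \<and> (\<forall>\<beta>\<in>Poly_Mapping.keys f. \<beta> \<noteq> \<alpha> \<longrightarrow> lex_less \<beta> \<alpha>)"
    using assms by blast
  fix \<gamma> assume g: "\<gamma> \<in> Poly_Mapping.keys f \<and> (\<forall>\<beta>\<in>Poly_Mapping.keys f. \<beta> \<noteq> \<gamma> \<longrightarrow> lex_less \<beta> \<gamma>)"
  show "\<gamma> = \<alpha>"
  proof (rule ccontr)
    assume "\<gamma> \<noteq> \<alpha>"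
    then have "lex_less \<gamma> \<alpha>" "lex_less \<alpha> \<gamma>" using g assms by auto
    then show False using lex_trans lex_irrefl by blast
  qed
qed

lemma lead_monom_props:
  assumes "f \<noteq> 0"
  shows "lead_monom f \<in> Poly_Mapping.keys f"
    "\<forall>\<beta>\<in>Poly_Mapping.keys f. \<beta> \<noteq> lead_monom f \<longrightarrow> lex_less \<beta> (lead_monom f)"
proof -
  obtain \<alpha> where a: "\<alpha> \<in> Poly_Mapping.keys f" "\<forall>\<beta>\<in>Poly_Mapping.keys f. \<beta> \<noteq> \<alpha> \<longrightarrow> lex_less \<beta> \<alpha>"
    using ex_lex_max[of "Poly_Mapping.keys f"] assms by auto
  have "lead_monom f = \<alpha>" by (rule lead_monomI[OF a])
  then show "lead_monom f \<in> Poly_Mapping.keys f"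
    "\<forall>\<beta>\<in>Poly_Mapping.keys f. \<beta> \<noteq> lead_monom f \<longrightarrow> lex_less \<beta> (lead_monom f)"
    using a by auto
qed

lemma lookup_sqfree: "finite \<sigma> \<Longrightarrow>
   Poly_Mapping.lookup (sqfree_monom \<sigma>) i = (if i \<in> \<sigma> then 1 else 0)"
  unfolding sqfree_monom_def by (simp add: lookup_sum lookup_single when_def)

lemma keys_sqfree: "finite \<sigma> \<Longrightarrow> Poly_Mapping.keys (sqfree_monom \<sigma>) = \<sigma>"
  by (auto simp: in_keys_iff lookup_sqfree split: if_splits)

lemma slt_lex: "slt \<rho> \<sigma> \<Longrightarrow> finite \<rho> \<Longrightarrow> finite \<sigma> \<Longrightarrow>
    lex_less (sqfree_monom \<rho>) (sqfree_monom \<sigma>)"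
  unfolding slt_def lex_less_def by (auto simp: lookup_sqfree)

lemma lex_slt: "lex_less \<beta> (sqfree_monom \<sigma>) \<Longrightarrow> finite \<sigma> \<Longrightarrow> slt (Poly_Mapping.keys \<beta>) \<sigma>"
proof -
  assume l: "lex_less \<beta> (sqfree_monom \<sigma>)" and f: "finite \<sigma>"
  then obtain i where i: "Poly_Mapping.lookup \<beta> i < (if i \<in> \<sigma> then 1 else 0)"
    and j: "\<forall>j<i. Poly_Mapping.lookup \<beta> j = (if j \<in> \<sigma> then 1 else 0)"
    unfolding lex_less_def by (auto simp: lookup_sqfree)
  have "i \<in> \<sigma>" using i by (auto split: if_splits)
  moreover have "i \<notin> Poly_Mapping.keys \<beta>" using i by (auto simp: in_keys_iff split: if_splits)
  moreover have "\<forall>j<i. j \<in> Poly_Mapping.keys \<beta> \<longleftrightarrow> j \<in> \<sigma>" using j by (auto simp: in_keys_iff)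
  ultimately show ?thesis unfolding slt_def by blast
qed

definition mon :: "monom \<Rightarrow> (nat \<Rightarrow> real) \<Rightarrow> real" where
  "mon \<alpha> v = (\<Prod>i\<in>Poly_Mapping.keys \<alpha>. v i ^ Poly_Mapping.lookup \<alpha> i)"

lemma mon_char: "mon \<alpha> (char_vec B) = ind (Poly_Mapping.keys \<alpha>) B"
proof (cases "Poly_Mapping.keys \<alpha> \<subseteq> B")
  case True
  then show ?thesis by (auto simp: mon_def char_vec_def ind_def intro!: prod.neutral)
next
  case False
  then obtain i where i: "i \<in> Poly_Mapping.keys \<alpha>" "i \<notin> B" by blast
  then have "Poly_Mapping.lookup \<alpha> i \<noteq> 0" by (simp add: in_keys_iff)
  then have "char_vec B i ^ Poly_Mapping.lookup \<alpha> i = 0" using i by (simp add: char_vec_def)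
  then show ?thesis unfolding mon_def using False i
    by (auto simp: ind_def intro!: prod_zero)
qed

lemma eval_super: "finite K \<Longrightarrow> Poly_Mapping.keys p \<subseteq> K \<Longrightarrow>
   eval_mpoly p v = (\<Sum>\<alpha>\<in>K. Poly_Mapping.lookup p \<alpha> * mon \<alpha> v)"
  unfolding eval_mpoly_def mon_def[symmetric]
  by (rule sum.mono_neutral_left) (auto simp: in_keys_iff)

lemma eval_add: "eval_mpoly (p + q) v = eval_mpoly p v + eval_mpoly q v"
proof -
  let ?K = "Poly_Mapping.keys p \<union> Poly_Mapping.keys q"
  have "eval_mpoly (p + q) v = (\<Sum>\<alpha>\<in>?K. Poly_Mapping.lookup (p + q) \<alpha> * mon \<alpha> v)"
    using keys_add[of p q] by (intro eval_super) auto
  also have "\<dots> = (\<Sum>\<alpha>\<in>?K. Poly_Mapping.lookup p \<alpha> * mon \<alpha> v) +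
                  (\<Sum>\<alpha>\<in>?K. Poly_Mapping.lookup q \<alpha> * mon \<alpha> v)"
    by (simp add: lookup_add algebra_simps sum.distrib)
  also have "\<dots> = eval_mpoly p v + eval_mpoly q v"
    by (subst (1 2) eval_super[of ?K]) auto
  finally show ?thesis .
qed

lemma eval_diff: "eval_mpoly (p - q) v = eval_mpoly p v - eval_mpoly q v"
  using eval_add[of "p - q" q v] by simp

lemma eval_zero: "eval_mpoly 0 v = 0"
  by (simp add: eval_mpoly_def)

lemma eval_single: "eval_mpoly (Poly_Mapping.single \<alpha> c) v = c * mon \<alpha> v"
  by (subst eval_super[of "{\<alpha>}"]) (auto simp: lookup_single)


lemma init_mem_div:
  assumes "monomial_poly (sqfree_monom \<tau>) \<in> initial_ideal E I" "finite \<tau>"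
  shows "\<exists>f\<in>I. f \<noteq> 0 \<and> (\<forall>i. Poly_Mapping.lookup (lead_monom f) i \<le> Poly_Mapping.lookup (sqfree_monom \<tau>) i)"
proof -
  let ?t = "sqfree_monom \<tau>"
  obtain T r where T: "monomial_poly ?t = (\<Sum>g\<in>T. r g * g)" "finite T"
    "T \<subseteq> {monomial_poly (lead_monom f) | f. f \<in> I \<and> f \<noteq> 0}"
    using assms(1) unfolding initial_ideal_def ideal_gen_def by blast
  have "1 = Poly_Mapping.lookup (monomial_poly ?t) ?t"
    by (simp add: monomial_poly_def)
  also have "\<dots> = (\<Sum>g\<in>T. Poly_Mapping.lookup (r g * g) ?t)"
    unfolding T(1) by (simp add: lookup_sum)
  finally have "(\<Sum>g\<in>T. Poly_Mapping.lookup (r g * g) ?t) \<noteq> 0" by simp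
  then obtain g where g: "g \<in> T" "Poly_Mapping.lookup (r g * g) ?t \<noteq> 0"
    by (meson sum.neutral)
  then obtain f where f: "f \<in> I" "f \<noteq> 0" "g = monomial_poly (lead_monom f)"
    using T(3) by blast
  have "?t \<in> Poly_Mapping.keys (r g * g)" using g(2) by (simp add: in_keys_iff)
  then have "?t \<in> {a + b | a b. a \<in> Poly_Mapping.keys (r g) \<and> b \<in> Poly_Mapping.keys g}"
    using keys_mult by blast
  then obtain a where a: "?t = a + lead_monom f"
    using f(3) by (auto simp: monomial_poly_def)
  have "\<forall>i. Poly_Mapping.lookup (lead_monom f) i \<le> Poly_Mapping.lookup ?t i"
    unfolding a by (simp add: lookup_add)
  then show ?thesis using f by blast
qed

lemma lm_dep:
  assumes f: "f \<in> vanishing_ideal M" "f \<noteq> 0"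
    and le: "\<forall>i. Poly_Mapping.lookup (lead_monom f) i \<le> Poly_Mapping.lookup (sqfree_monom \<tau>) i"
    and fin: "finite \<tau>"
  shows "Poly_Mapping.keys (lead_monom f) \<subseteq> \<tau>" "dep (bases M) (Poly_Mapping.keys (lead_monom f))"
proof -
  define \<alpha> where "\<alpha> = lead_monom f"
  define \<sigma> where "\<sigma> = Poly_Mapping.keys \<alpha>"
  show s: "Poly_Mapping.keys (lead_monom f) \<subseteq> \<tau>"
  proof
    fix i assume "i \<in> Poly_Mapping.keys (lead_monom f)"
    then have "Poly_Mapping.lookup (lead_monom f) i \<noteq> 0" by (simp add: in_keys_iff)
    then show "i \<in> \<tau>" using le[rule_format, of i] fin by (auto simp: lookup_sqfree split: if_splits)
  qed
  have fs: "finite \<sigma>" by (simp add: \<sigma>_def)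
  have ae: "\<alpha> = sqfree_monom \<sigma>"
  proof (rule poly_mapping_eqI)
    fix i
    have "Poly_Mapping.lookup \<alpha> i \<le> 1" using le[rule_format, of i] fin
      by (auto simp: \<alpha>_def lookup_sqfree split: if_splits)
    then show "Poly_Mapping.lookup \<alpha> i = Poly_Mapping.lookup (sqfree_monom \<sigma>) i"
      using fs by (auto simp: lookup_sqfree \<sigma>_def in_keys_iff)
  qed
  have ak: "\<alpha> \<in> Poly_Mapping.keys f" and amax: "\<forall>\<beta>\<in>Poly_Mapping.keys f. \<beta> \<noteq> \<alpha> \<longrightarrow> lex_less \<beta> \<alpha>"
    using lead_monom_props[OF f(2)] by (auto simp: \<alpha>_def)
  define c where "c = Poly_Mapping.lookup f \<alpha>"
  have c: "c \<noteq> 0" using ak by (simp add: c_def in_keys_iff)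
  define K where "K = Poly_Mapping.keys f - {\<alpha>}"
  define d where "d = (\<lambda>\<beta>. - Poly_Mapping.lookup f \<beta> / c)"
  have sp: "(\<lambda>B. \<Sum>\<beta>\<in>K. d \<beta> * ind (Poly_Mapping.keys \<beta>) B) \<in> spn (\<lambda>\<rho>. slt \<rho> \<sigma>)"
  proof (rule spn_sum)
    show "finite K" by (simp add: K_def)
    fix \<beta> assume "\<beta> \<in> K"
    then have "lex_less \<beta> (sqfree_monom \<sigma>)" using amax ae by (auto simp: K_def)
    then show "slt (Poly_Mapping.keys \<beta>) \<sigma>" using lex_slt fs by blast
  qed
  have "\<forall>B\<in>bases M. ind \<sigma> B = (\<Sum>\<beta>\<in>K. d \<beta> * ind (Poly_Mapping.keys \<beta>) B)"
  proof
    fix B assume B: "B \<in> bases M"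
    have "0 = eval_mpoly f (char_vec B)" using f(1) B by (simp add: vanishing_ideal_def)
    also have "\<dots> = (\<Sum>\<beta>\<in>Poly_Mapping.keys f. Poly_Mapping.lookup f \<beta> * ind (Poly_Mapping.keys \<beta>) B)"
      by (simp add: eval_mpoly_def mon_def[symmetric] mon_char)
    also have "\<dots> = c * ind \<sigma> B + (\<Sum>\<beta>\<in>K. Poly_Mapping.lookup f \<beta> * ind (Poly_Mapping.keys \<beta>) B)"
      unfolding K_def c_def \<sigma>_def using ak by (simp add: sum.remove)
    finally have "c * ind \<sigma> B = - (\<Sum>\<beta>\<in>K. Poly_Mapping.lookup f \<beta> * ind (Poly_Mapping.keys \<beta>) B)"
      by simp
    then have "ind \<sigma> B = - (\<Sum>\<beta>\<in>K. Poly_Mapping.lookup f \<beta> * ind (Poly_Mapping.keys \<beta>) B) / c"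
      using c by (simp add: field_simps)
    also have "\<dots> = (\<Sum>\<beta>\<in>K. d \<beta> * ind (Poly_Mapping.keys \<beta>) B)"
      by (simp add: d_def sum_divide_distrib sum_negf[symmetric])
    finally show "ind \<sigma> B = (\<Sum>\<beta>\<in>K. d \<beta> * ind (Poly_Mapping.keys \<beta>) B)" .
  qed
  then show "dep (bases M) (Poly_Mapping.keys (lead_monom f))"
    using sp unfolding dep_def \<sigma>_def \<alpha>_def
    by (intro bexI[where x="\<lambda>B. \<Sum>\<beta>\<in>K. d \<beta> * ind (Poly_Mapping.keys \<beta>) B"])
qed

lemma spn_poly:
  assumes "g \<in> spn P" "finite E"
  shows "\<exists>p. (\<forall>\<alpha>\<in>Poly_Mapping.keys p. \<exists>\<rho>. P \<rho> \<and> \<rho> \<subseteq> E \<and> \<alpha> = sqfree_monom \<rho>) \<and>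
     (\<forall>B. B \<subseteq> E \<longrightarrow> eval_mpoly p (char_vec B) = g B)"
  using assms(1)
proof (induction g rule: spn.induct)
  case spn0
  show ?case by (rule exI[of _ 0]) (simp add: eval_zero)
next
  case (spnS g \<rho> c)
  then obtain p where p: "\<forall>\<alpha>\<in>Poly_Mapping.keys p. \<exists>\<rho>. P \<rho> \<and> \<rho> \<subseteq> E \<and> \<alpha> = sqfree_monom \<rho>"
    "\<forall>B. B \<subseteq> E \<longrightarrow> eval_mpoly p (char_vec B) = g B" by blast
  show ?case
  proof (cases "\<rho> \<subseteq> E")
    case True
    then have fr: "finite \<rho>" using assms(2) finite_subset by blast
    let ?p = "p + Poly_Mapping.single (sqfree_monom \<rho>) c"
    have "\<forall>\<alpha>\<in>Poly_Mapping.keys ?p. \<exists>\<rho>. P \<rho> \<and> \<rho> \<subseteq> E \<and> \<alpha> = sqfree_monom \<rho>"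
      using keys_add[of p "Poly_Mapping.single (sqfree_monom \<rho>) c"] p(1) spnS(2) True
      by (auto split: if_splits)
    moreover have "\<forall>B. B \<subseteq> E \<longrightarrow> eval_mpoly ?p (char_vec B) = g B + c * ind \<rho> B"
      using p(2) by (simp add: eval_add eval_single mon_char keys_sqfree[OF fr])
    ultimately show ?thesis by blast
  next
    case False
    then have "\<forall>B. B \<subseteq> E \<longrightarrow> ind \<rho> B = 0" by (auto simp: ind_def)
    then show ?thesis using p by (intro exI[of _ p]) auto
  qed
qed

lemma sqfree_inj: "finite \<rho> \<Longrightarrow> finite \<sigma> \<Longrightarrow> sqfree_monom \<rho> = sqfree_monom \<sigma> \<Longrightarrow> \<rho> = \<sigma>"
  by (metis keys_sqfree)

lemma dep_poly:
  assumes M: "is_matroid M" and d: "dep (bases M) \<sigma>" and s: "\<sigma> \<subseteq> ground M"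
  shows "\<exists>f\<in>vanishing_ideal M. f \<noteq> 0 \<and> lead_monom f = sqfree_monom \<sigma>"
proof -
  have fE: "finite (ground M)" and BE: "\<forall>B\<in>bases M. B \<subseteq> ground M"
    using M by (auto simp: is_matroid_def)
  have fs: "finite \<sigma>" using s fE finite_subset by blast
  obtain g where g: "g \<in> spn (\<lambda>\<rho>. slt \<rho> \<sigma>)" "\<forall>B\<in>bases M. ind \<sigma> B = g B"
    using d unfolding dep_def by blast
  obtain p where p: "\<forall>\<alpha>\<in>Poly_Mapping.keys p. \<exists>\<rho>. slt \<rho> \<sigma> \<and> \<rho> \<subseteq> ground M \<and> \<alpha> = sqfree_monom \<rho>"
    "\<forall>B. B \<subseteq> ground M \<longrightarrow> eval_mpoly p (char_vec B) = g B"
    using spn_poly[OF g(1) fE] by blast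
  let ?s = "sqfree_monom \<sigma>"
  define f where "f = Poly_Mapping.single ?s 1 - p"
  have np: "?s \<notin> Poly_Mapping.keys p"
  proof
    assume "?s \<in> Poly_Mapping.keys p"
    then obtain \<rho> where r: "slt \<rho> \<sigma>" "\<rho> \<subseteq> ground M" "?s = sqfree_monom \<rho>" using p(1) by blast
    then have "\<rho> = \<sigma>" using sqfree_inj[of \<rho> \<sigma>] fs fE finite_subset by metis
    then show False using r(1) slt_irrefl by blast
  qed
  have kf: "Poly_Mapping.keys f \<subseteq> insert ?s (Poly_Mapping.keys p)"
    unfolding f_def using keys_diff[of "Poly_Mapping.single ?s 1" p] by auto
  have sk: "?s \<in> Poly_Mapping.keys f"
    using np by (simp add: f_def in_keys_iff lookup_minus)
  then have f0: "f \<noteq> 0" by auto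
  have lm: "lead_monom f = ?s"
  proof (rule lead_monomI[OF sk], intro ballI impI)
    fix \<beta> assume "\<beta> \<in> Poly_Mapping.keys f" "\<beta> \<noteq> ?s"
    then have "\<beta> \<in> Poly_Mapping.keys p" using kf by blast
    then obtain \<rho> where r: "slt \<rho> \<sigma>" "\<rho> \<subseteq> ground M" "\<beta> = sqfree_monom \<rho>" using p(1) by blast
    then show "lex_less \<beta> ?s" using slt_lex fs fE finite_subset by metis
  qed
  have "f \<in> poly_ring (ground M)"
    unfolding poly_ring_def
  proof (intro CollectI ballI)
    fix \<alpha> assume "\<alpha> \<in> Poly_Mapping.keys f"
    then have "\<alpha> = ?s \<or> \<alpha> \<in> Poly_Mapping.keys p" using kf by blast
    then show "Poly_Mapping.keys \<alpha> \<subseteq> ground M"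
    proof
      assume "\<alpha> = ?s" then show ?thesis using keys_sqfree[OF fs] s by simp
    next
      assume "\<alpha> \<in> Poly_Mapping.keys p"
      then obtain \<rho> where r: "\<rho> \<subseteq> ground M" "\<alpha> = sqfree_monom \<rho>" using p(1) by blast
      then show ?thesis using keys_sqfree fE finite_subset by metis
    qed
  qed
  moreover have "\<forall>B\<in>bases M. eval_mpoly f (char_vec B) = 0"
  proof
    fix B assume B: "B \<in> bases M"
    have "eval_mpoly f (char_vec B) = ind \<sigma> B - g B"
      unfolding f_def using p(2) BE B by (simp add: eval_diff eval_single mon_char keys_sqfree[OF fs])
    then show "eval_mpoly f (char_vec B) = 0" using g(2) B by simp
  qed
  ultimately have "f \<in> vanishing_ideal M" by (simp add: vanishing_ideal_def)
  then show ?thesis using f0 lm by blast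
qed

lemma poly_init:
  assumes "f \<in> I" "f \<noteq> 0" "lead_monom f = sqfree_monom \<sigma>" "\<sigma> \<subseteq> \<tau>" "\<tau> \<subseteq> E" "finite E"
  shows "monomial_poly (sqfree_monom \<tau>) \<in> initial_ideal E I"
proof -
  have ft: "finite \<tau>" using assms finite_subset by blast
  have fs: "finite \<sigma>" using assms ft finite_subset by blast
  let ?g = "monomial_poly (sqfree_monom \<sigma>)"
  let ?r = "monomial_poly (sqfree_monom (\<tau> - \<sigma>))"
  have e: "sqfree_monom (\<tau> - \<sigma>) + sqfree_monom \<sigma> = sqfree_monom \<tau>"
    unfolding sqfree_monom_def using ft fs assms(4)
    by (metis Diff_partition Diff_disjoint finite_Diff sum.union_disjoint Un_commute inf_commute)
  have "?r * ?g = monomial_poly (sqfree_monom \<tau>)"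
    unfolding monomial_poly_def mult_single e by simp
  then have eq: "monomial_poly (sqfree_monom \<tau>) = (\<Sum>g\<in>{?g}. (\<lambda>_. ?r) g * g)" by simp
  have "?r \<in> poly_ring E"
    unfolding poly_ring_def monomial_poly_def using keys_sqfree[of "\<tau> - \<sigma>"] ft assms(5) by auto
  moreover have "?g \<in> {monomial_poly (lead_monom f) | f. f \<in> I \<and> f \<noteq> 0}"
    using assms(1-3) by (intro CollectI exI[of _ f]) simp
  ultimately show ?thesis unfolding initial_ideal_def ideal_gen_def
    using eq by (intro CollectI exI[of _ "{?g}"] exI[of _ "\<lambda>_. ?r"]) simp
qed

lemma Slex_eq:
  assumes M: "is_matroid M"
  shows "S_lex M = St (bases M)"
proof -
  have fE: "finite (ground M)" and BE: "\<forall>B\<in>bases M. B \<subseteq> ground M" and ne: "bases M \<noteq> {}"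
    using M by (auto simp: is_matroid_def)
  have key: "monomial_poly (sqfree_monom \<tau>) \<in> initial_ideal (ground M) (vanishing_ideal M)
      \<longleftrightarrow> dep (bases M) \<tau>" if t: "\<tau> \<subseteq> ground M" for \<tau>
  proof
    assume a: "monomial_poly (sqfree_monom \<tau>) \<in> initial_ideal (ground M) (vanishing_ideal M)"
    have ft: "finite \<tau>" using t fE finite_subset by blast
    obtain f where f: "f \<in> vanishing_ideal M" "f \<noteq> 0"
      "\<forall>i. Poly_Mapping.lookup (lead_monom f) i \<le> Poly_Mapping.lookup (sqfree_monom \<tau>) i"
      using init_mem_div[OF a ft] by blast
    show "dep (bases M) \<tau>"
      using lm_dep[OF f ft] dep_up by blast
  next
    assume "dep (bases M) \<tau>"
    then obtain f where "f\<in>vanishing_ideal M" "f \<noteq> 0" "lead_monom f = sqfree_monom \<tau>"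
      using dep_poly[OF M _ t] by blast
    then show "monomial_poly (sqfree_monom \<tau>) \<in> initial_ideal (ground M) (vanishing_ideal M)"
      using poly_init[OF _ _ _ subset_refl t fE] by blast
  qed
  have sub: "\<tau> \<subseteq> ground M" if "\<tau> \<in> St (bases M)" for \<tau>
  proof (rule ccontr)
    assume "\<not> \<tau> \<subseteq> ground M"
    then have "\<forall>B\<in>bases M. \<not> \<tau> \<subseteq> B" using BE by blast
    then have "dep (bases M) \<tau>" by (rule dep_triv)
    then show False using that by (simp add: St_def)
  qed
  show ?thesis
    unfolding S_lex_def using key sub by (auto simp: St_def)
qed



lemma ground_del[simp]: "ground (deletion M m) = ground M - {m}"
  by (simp add: deletion_def ground_def)
lemma ground_con[simp]: "ground (contraction M m) = ground M - {m}"
  by (simp add: contraction_def ground_def)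

lemma bases_pair[simp]: "bases (E, Bs) = Bs" by (simp add: bases_def)

lemma del_if: "bases (deletion M m) = (if (\<forall>B\<in>bases M. m \<in> B) then (\<lambda>B. B - {m}) ` bases M
     else {B \<in> bases M. m \<notin> B})"
  unfolding deletion_def by simp

lemma con_if: "bases (contraction M m) = (if (\<forall>B\<in>bases M. m \<notin> B) then bases M
     else (\<lambda>B. B - {m}) ` {B \<in> bases M. m \<in> B})"
  unfolding contraction_def by simp

lemma bases_del: "bases (deletion M m) =
   (if {B\<in>bases M. m \<notin> B} = {} then (\<lambda>B. B - {m}) ` {B\<in>bases M. m \<in> B} else {B\<in>bases M. m \<notin> B})"
proof (cases "\<forall>B\<in>bases M. m \<in> B")
  case True
  then have e1: "{B\<in>bases M. m \<in> B} = bases M" and e2: "{B\<in>bases M. m \<notin> B} = {}" by auto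
  show ?thesis unfolding del_if if_P[OF True] e2 e1 by simp
next
  case False
  then have ne: "{B\<in>bases M. m \<notin> B} \<noteq> {}" by auto
  show ?thesis unfolding del_if if_not_P[OF False] if_not_P[OF ne] ..
qed

lemma bases_con: "bases (contraction M m) =
   (if (\<lambda>B. B - {m}) ` {B\<in>bases M. m \<in> B} = {} then {B\<in>bases M. m \<notin> B} else (\<lambda>B. B - {m}) ` {B\<in>bases M. m \<in> B})"
proof (cases "\<forall>B\<in>bases M. m \<notin> B")
  case True
  then have e1: "{B\<in>bases M. m \<notin> B} = bases M" and e2: "{B\<in>bases M. m \<in> B} = {}" by auto
  show ?thesis unfolding con_if if_P[OF True] e2 e1 by simp
next
  case False
  then have ne: "(\<lambda>B. B - {m}) ` {B\<in>bases M. m \<in> B} \<noteq> {}" by auto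
  show ?thesis unfolding con_if if_not_P[OF False] if_not_P[OF ne] ..
qed

lemma matroid_del:
  assumes M: "is_matroid M" shows "is_matroid (deletion M m)"
proof (cases "\<forall>B\<in>bases M. m \<in> B")
  case True
  have b: "bases (deletion M m) = (\<lambda>B. B - {m}) ` bases M"
    unfolding del_if if_P[OF True] using True by simp
  show ?thesis unfolding is_matroid_def b ground_del
  proof (intro conjI ballI)
    show "finite (ground M - {m})" using M by (simp add: is_matroid_def)
    show "(\<lambda>B. B - {m}) ` bases M \<noteq> {}" using M by (simp add: is_matroid_def)
  next
    fix B assume "B \<in> (\<lambda>B. B - {m}) ` bases M"
    then show "B \<subseteq> ground M - {m}" using M by (auto simp: is_matroid_def)
  next
    fix B1 B2 x assume B1: "B1 \<in> (\<lambda>B. B - {m}) ` bases M" and B2: "B2 \<in> (\<lambda>B. B - {m}) ` bases M"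
      and x: "x \<in> B1 - B2"
    then obtain C1 C2 where C: "C1 \<in> bases M" "C2 \<in> bases M" "B1 = C1 - {m}" "B2 = C2 - {m}" by auto
    have m: "m \<in> C1" "m \<in> C2" using True C by auto
    have "x \<in> C1 - C2" "x \<noteq> m" using x C by auto
    then obtain y where y: "y \<in> C2 - C1" "insert y (C1 - {x}) \<in> bases M"
      using M C(1,2) unfolding is_matroid_def by blast
    have "y \<noteq> m" using y m by auto
    then have "y \<in> B2 - B1" "insert y (B1 - {x}) = insert y (C1 - {x}) - {m}"
      using y C \<open>x \<noteq> m\<close> by auto
    then show "\<exists>y\<in>B2 - B1. insert y (B1 - {x}) \<in> (\<lambda>B. B - {m}) ` bases M"
      using y(2) by blast
  qed
next
  case False
  have b: "bases (deletion M m) = {B\<in>bases M. m \<notin> B}"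
    unfolding del_if if_not_P[OF False] using False by simp
  show ?thesis unfolding is_matroid_def b ground_del
  proof (intro conjI ballI)
    show "finite (ground M - {m})" using M by (simp add: is_matroid_def)
    show "{B\<in>bases M. m \<notin> B} \<noteq> {}" using False by auto
  next
    fix B assume "B \<in> {B\<in>bases M. m \<notin> B}"
    then show "B \<subseteq> ground M - {m}" using M by (auto simp: is_matroid_def)
  next
    fix B1 B2 x assume B1: "B1 \<in> {B\<in>bases M. m \<notin> B}" and B2: "B2 \<in> {B\<in>bases M. m \<notin> B}"
      and x: "x \<in> B1 - B2"
    then obtain y where y: "y \<in> B2 - B1" "insert y (B1 - {x}) \<in> bases M"
      using M unfolding is_matroid_def by blast
    then have "m \<notin> insert y (B1 - {x})" using B1 B2 by auto
    then show "\<exists>y\<in>B2 - B1. insert y (B1 - {x}) \<in> {B\<in>bases M. m \<notin> B}"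
      using y by blast
  qed
qed

lemma matroid_con:
  assumes M: "is_matroid M" shows "is_matroid (contraction M m)"
proof (cases "\<forall>B\<in>bases M. m \<notin> B")
  case True
  have b: "bases (contraction M m) = bases M"
    unfolding con_if if_P[OF True] using True by simp
  show ?thesis unfolding is_matroid_def b ground_con
  proof (intro conjI ballI)
    show "finite (ground M - {m})" using M by (simp add: is_matroid_def)
    show "bases M \<noteq> {}" using M by (simp add: is_matroid_def)
  next
    fix B assume "B \<in> bases M"
    then show "B \<subseteq> ground M - {m}" using M True by (auto simp: is_matroid_def)
  next
    fix B1 B2 x assume "B1 \<in> bases M" "B2 \<in> bases M" "x \<in> B1 - B2"
    then show "\<exists>y\<in>B2 - B1. insert y (B1 - {x}) \<in> bases M"
      using M unfolding is_matroid_def by blast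
  qed
next
  case False
  have b: "bases (contraction M m) = (\<lambda>B. B - {m}) ` {B\<in>bases M. m \<in> B}"
    unfolding con_if if_not_P[OF False] using False by simp
  show ?thesis unfolding is_matroid_def b ground_con
  proof (intro conjI ballI)
    show "finite (ground M - {m})" using M by (simp add: is_matroid_def)
    show "(\<lambda>B. B - {m}) ` {B\<in>bases M. m \<in> B} \<noteq> {}" using False by auto
  next
    fix B assume "B \<in> (\<lambda>B. B - {m}) ` {B\<in>bases M. m \<in> B}"
    then show "B \<subseteq> ground M - {m}" using M by (auto simp: is_matroid_def)
  next
    fix B1 B2 x assume B1: "B1 \<in> (\<lambda>B. B - {m}) ` {B\<in>bases M. m \<in> B}"
      and B2: "B2 \<in> (\<lambda>B. B - {m}) ` {B\<in>bases M. m \<in> B}"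
      and x: "x \<in> B1 - B2"
    then obtain C1 C2 where C: "C1 \<in> bases M" "C2 \<in> bases M" "B1 = C1 - {m}" "B2 = C2 - {m}"
      "m \<in> C1" "m \<in> C2" by auto
    have "x \<in> C1 - C2" "x \<noteq> m" using x C by auto
    then obtain y where y: "y \<in> C2 - C1" "insert y (C1 - {x}) \<in> bases M"
      using M C(1,2) unfolding is_matroid_def by blast
    have "y \<noteq> m" using y C by auto
    then have "y \<in> B2 - B1" "insert y (B1 - {x}) = insert y (C1 - {x}) - {m}"
      "m \<in> insert y (C1 - {x})"
      using y C \<open>x \<noteq> m\<close> by auto
    then show "\<exists>y\<in>B2 - B1. insert y (B1 - {x}) \<in> (\<lambda>B. B - {m}) ` {B\<in>bases M. m \<in> B}"
      using y(2) by blast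
  qed
qed

lemma card_minus1_less: "finite A \<Longrightarrow> x \<in> A \<Longrightarrow> card A - Suc 0 < card A"
  by (metis card_gt_0_iff diff_Suc_less empty_iff)

function Lam :: "matroid \<Rightarrow> nat set \<Rightarrow> nat set" where
  "Lam M B = (if finite (ground M) \<and> ground M \<noteq> {} then
     (if Max (ground M) \<notin> B then Lam (deletion M (Max (ground M))) B
      else (if insert (Max (ground M)) (Lam (contraction M (Max (ground M))) (B - {Max (ground M)})) \<in> St (bases M)
            then insert (Max (ground M)) (Lam (contraction M (Max (ground M))) (B - {Max (ground M)}))
            else Lam (contraction M (Max (ground M))) (B - {Max (ground M)})))
   else {})"
  by pat_completeness auto
termination
  by (relation "measure (\<lambda>(M, B). card (ground M))") (auto dest: card_minus1_less)

declare Lam.simps[simp del]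

lemma Lam_eq:
  assumes "finite (ground M)" "ground M \<noteq> {}" "m = Max (ground M)"
  shows "Lam M B = (if m \<notin> B then Lam (deletion M m) B
      else (if insert m (Lam (contraction M m) (B - {m})) \<in> St (bases M)
            then insert m (Lam (contraction M m) (B - {m}))
            else Lam (contraction M m) (B - {m})))"
  using assms by (subst Lam.simps) simp

lemma spn_false: "f \<in> spn (\<lambda>_. False) \<Longrightarrow> f = (\<lambda>B. 0)"
  by (induction f rule: spn.induct) auto

lemma St_single_empty: "St {{}} = {{}}"
proof -
  have "\<not> dep {{}} {}"
  proof
    assume "dep {{}} {}"
    then obtain f where f: "f \<in> spn (\<lambda>\<rho>. slt \<rho> {})" "ind {} {} = f {}"
      unfolding dep_def by blast
    have "(\<lambda>\<rho>::nat set. slt \<rho> {}) = (\<lambda>_. False)" by (auto simp: slt_def fun_eq_iff)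
    then have "f = (\<lambda>B. 0)" using f(1) spn_false by simp
    then show False using f(2) by (simp add: ind_def)
  qed
  moreover have "dep {{}} \<tau>" if "\<tau> \<noteq> {}" for \<tau>
    using that by (intro dep_triv) auto
  ultimately show ?thesis unfolding St_def by auto
qed

lemma empty_ground_bases: "is_matroid M \<Longrightarrow> ground M = {} \<Longrightarrow> bases M = {{}}"
  unfolding is_matroid_def by auto

lemma Lam_good:
  "is_matroid M \<Longrightarrow> bij_betw (Lam M) (bases M) (St (bases M)) \<and> (\<forall>B\<in>bases M. Lam M B \<subseteq> B)"
proof (induction "card (ground M)" arbitrary: M rule: less_induct)
  case less
  note M = less.prems
  have fE: "finite (ground M)" and BE: "\<forall>B\<in>bases M. B \<subseteq> ground M"
    using M by (auto simp: is_matroid_def)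
  show ?case
  proof (cases "ground M = {}")
    case True
    have b: "bases M = {{}}" using empty_ground_bases[OF M True] .
    have "Lam M {} = {}" using True by (subst Lam.simps) simp
    then show ?thesis unfolding b St_single_empty by (simp add: bij_betw_def)
  next
    case False
    define m where "m = Max (ground M)"
    define X where "X = bases M"
    define A where "A = {B\<in>X. m \<notin> B}"
    define C where "C = (\<lambda>B. B - {m}) ` {B\<in>X. m \<in> B}"
    have mE: "m \<in> ground M" using fE False by (simp add: m_def)
    have hX: "\<forall>B\<in>X. \<forall>x\<in>B. x \<le> m" using BE fE by (auto simp: X_def m_def intro!: Max_ge)
    have lt: "card (ground M - {m}) < card (ground M)" using fE mE by (rule card_Diff1_less)
    have IHd: "bij_betw (Lam (deletion M m)) (bases (deletion M m)) (St (bases (deletion M m)))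
        \<and> (\<forall>B\<in>bases (deletion M m). Lam (deletion M m) B \<subseteq> B)"
      using less.hyps[of "deletion M m"] lt matroid_del[OF M] by simp
    have IHc: "bij_betw (Lam (contraction M m)) (bases (contraction M m)) (St (bases (contraction M m)))
        \<and> (\<forall>B\<in>bases (contraction M m). Lam (contraction M m) B \<subseteq> B)"
      using less.hyps[of "contraction M m"] lt matroid_con[OF M] by simp
    have bd: "bases (deletion M m) = A" if ne: "A \<noteq> {}"
    proof -
      have ne': "{B\<in>bases M. m \<notin> B} \<noteq> {}" using ne unfolding A_def X_def .
      show ?thesis unfolding bases_del if_not_P[OF ne'] A_def X_def by (rule refl)
    qed
    have bc: "bases (contraction M m) = C" if ne: "C \<noteq> {}"
    proof -
      have ne': "(\<lambda>B. B - {m}) ` {B\<in>bases M. m \<in> B} \<noteq> {}" using ne unfolding C_def X_def .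
      show ?thesis unfolding bases_con if_not_P[OF ne'] C_def X_def by (rule refl)
    qed
    have L1: "bij_betw (Lam (deletion M m)) A (St A)"
      using IHd bd by (cases "A = {}") (auto simp: St_empty bij_betw_def)
    have L2: "bij_betw (Lam (contraction M m)) C (St C)"
      using IHc bc by (cases "C = {}") (auto simp: St_empty bij_betw_def)
    have L: "Lam M B = (if m \<notin> B then Lam (deletion M m) B
      else (if insert m (Lam (contraction M m) (B - {m})) \<in> St X
            then insert m (Lam (contraction M m) (B - {m}))
            else Lam (contraction M m) (B - {m})))" for B
      using Lam_eq[OF fE False m_def] by (simp add: X_def)
    have bij: "bij_betw (Lam M) X (St X)"
      by (rule bij_rec[OF hX A_def C_def L1 L2]) (rule L)
    have sub: "Lam M B \<subseteq> B" if B: "B \<in> X" for B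
    proof (cases "m \<in> B")
      case True
      have c: "B - {m} \<in> C" using B True by (auto simp: C_def)
      then have "Lam (contraction M m) (B - {m}) \<subseteq> B - {m}" using IHc bc by auto
      then show ?thesis using L[of B] True by auto
    next
      case False
      have a: "B \<in> A" using B False by (auto simp: A_def)
      then have "Lam (deletion M m) B \<subseteq> B" using IHd bd by auto
      then show ?thesis using L[of B] False by auto
    qed
    show ?thesis using bij sub by (simp add: X_def)
  qed
qed

lemma Lam_unique:
  assumes G: "good_family \<Lambda>'"
  shows "is_matroid M \<Longrightarrow> B \<in> bases M \<Longrightarrow> \<Lambda>' M B = Lam M B"
proof (induction "card (ground M)" arbitrary: M B rule: less_induct)
  case less
  note M = less.prems(1) and B = less.prems(2)
  have fE: "finite (ground M)" and BE: "\<forall>B\<in>bases M. B \<subseteq> ground M"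
    using M by (auto simp: is_matroid_def)
  have GM: "bij_betw (\<Lambda>' M) (bases M) (S_lex M)"
    and GR: "ground M \<noteq> {} \<Longrightarrow> (let m = Max (ground M) in \<forall>B\<in>bases M.
         \<Lambda>' M B \<subseteq> B \<and>
         (m \<notin> B \<longrightarrow> \<Lambda>' M B = \<Lambda>' (deletion M m) B) \<and>
         (m \<in> B \<longrightarrow> \<Lambda>' M B - {m} = \<Lambda>' (contraction M m) (B - {m})))"
    using G M unfolding good_family_def by blast+
  have SX: "S_lex M = St (bases M)" using Slex_eq[OF M] .
  show ?case
  proof (cases "ground M = {}")
    case True
    have b: "bases M = {{}}" using empty_ground_bases[OF M True] .
    have "\<Lambda>' M B \<in> S_lex M" using GM B by (auto simp: bij_betw_def)
    then have "\<Lambda>' M B = {}" using True by (simp add: S_lex_def)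
    moreover have "Lam M B = {}" using True by (subst Lam.simps) simp
    ultimately show ?thesis by simp
  next
    case False
    define m where "m = Max (ground M)"
    define X where "X = bases M"
    define A where "A = {B\<in>X. m \<notin> B}"
    define C where "C = (\<lambda>B. B - {m}) ` {B\<in>X. m \<in> B}"
    have mE: "m \<in> ground M" using fE False by (simp add: m_def)
    have hX: "\<forall>B\<in>X. \<forall>x\<in>B. x \<le> m" using BE fE by (auto simp: X_def m_def intro!: Max_ge)
    have lt: "card (ground M - {m}) < card (ground M)" using fE mE by (rule card_Diff1_less)
    have bd: "bases (deletion M m) = A" if ne: "A \<noteq> {}"
    proof -
      have ne': "{B\<in>bases M. m \<notin> B} \<noteq> {}" using ne unfolding A_def X_def .
      show ?thesis unfolding bases_del if_not_P[OF ne'] A_def X_def by (rule refl)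
    qed
    have bc: "bases (contraction M m) = C" if ne: "C \<noteq> {}"
    proof -
      have ne': "(\<lambda>B. B - {m}) ` {B\<in>bases M. m \<in> B} \<noteq> {}" using ne unfolding C_def X_def .
      show ?thesis unfolding bases_con if_not_P[OF ne'] C_def X_def by (rule refl)
    qed
    have GR': "\<forall>B\<in>X. (m \<notin> B \<longrightarrow> \<Lambda>' M B = \<Lambda>' (deletion M m) B) \<and>
         (m \<in> B \<longrightarrow> \<Lambda>' M B - {m} = \<Lambda>' (contraction M m) (B - {m}))"
      using GR[OF False] by (simp add: m_def X_def Let_def)
    have L: "Lam M B = (if m \<notin> B then Lam (deletion M m) B
      else (if insert m (Lam (contraction M m) (B - {m})) \<in> St X
            then insert m (Lam (contraction M m) (B - {m}))
            else Lam (contraction M m) (B - {m})))" for B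
      using Lam_eq[OF fE False m_def] by (simp add: X_def)
    have IHd: "\<And>B'. B' \<in> bases (deletion M m) \<Longrightarrow> \<Lambda>' (deletion M m) B' = Lam (deletion M m) B'"
      using less.hyps[of "deletion M m"] lt matroid_del[OF M] by simp
    have IHc: "\<And>B'. B' \<in> bases (contraction M m) \<Longrightarrow> \<Lambda>' (contraction M m) B' = Lam (contraction M m) B'"
      using less.hyps[of "contraction M m"] lt matroid_con[OF M] by simp
    have BX: "B \<in> X" using B by (simp add: X_def)
    show ?thesis
    proof (cases "m \<in> B")
      case False
      have a: "B \<in> A" using BX False by (auto simp: A_def)
      then have Ane: "A \<noteq> {}" by blast
      have "\<Lambda>' M B = \<Lambda>' (deletion M m) B" using GR' BX False by blast
      also have "\<dots> = Lam (deletion M m) B" using IHd[of B] bd[OF Ane] a by simp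
      also have "\<dots> = Lam M B" using L[of B] False by simp
      finally show ?thesis .
    next
      case True
      define t where "t = Lam (contraction M m) (B - {m})"
      have c: "B - {m} \<in> C" using BX True by (auto simp: C_def)
      have Ct: "t \<in> St C"
      proof -
        have "bij_betw (Lam (contraction M m)) C (St C)"
          using Lam_good[OF matroid_con[OF M]] bc c by auto
        then show ?thesis using c by (auto simp: t_def bij_betw_def)
      qed
      have mt: "m \<notin> t" using St_nom[of C m t] Ct by (auto simp: C_def)
      have e: "\<Lambda>' M B - {m} = t"
        using GR' BX True IHc[of "B - {m}"] bc c by (auto simp: t_def)
      have two: "\<Lambda>' M B = t \<or> \<Lambda>' M B = insert m t"
        using e mt by blast
      have inS: "\<Lambda>' M B \<in> St X" using GM BX SX by (auto simp: bij_betw_def X_def)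
      show ?thesis
      proof (cases "insert m t \<in> St X")
        case ins: True
        have Lm: "Lam M B = insert m t" using L[of B] True ins by (simp add: t_def)
        show ?thesis
        proof (cases "\<Lambda>' M B = insert m t")
          case True then show ?thesis using Lm by simp
        next
          case nt: False
          then have lt': "\<Lambda>' M B = t" using two by blast
          have tA: "t \<in> St A" using St_rec(2)[OF hX A_def C_def mt] ins by blast
          then have Ane: "A \<noteq> {}" using St_empty by auto
          have "bij_betw (Lam (deletion M m)) A (St A)"
            using Lam_good[OF matroid_del[OF M]] bd[OF Ane] by auto
          then have "t \<in> Lam (deletion M m) ` A" using tA by (simp add: bij_betw_def)
          then obtain B'' where B'': "B'' \<in> A" "Lam (deletion M m) B'' = t"
            by (metis imageE)
          have B''X: "B'' \<in> X" "m \<notin> B''" using B''(1) by (auto simp: A_def)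
          have "\<Lambda>' M B'' = t"
            using GR' B''X IHd[of B''] bd[OF Ane] B'' by auto
          then have "\<Lambda>' M B'' = \<Lambda>' M B" using lt' by simp
          then have "B'' = B" using GM B''X(1) BX by (auto simp: bij_betw_def X_def dest: inj_onD)
          then show ?thesis using B''X True by simp
        qed
      next
        case nins: False
        have Lm: "Lam M B = t" using L[of B] True nins by (simp add: t_def)
        then show ?thesis using two inS nins by auto
      qed
    qed
  qed
qed

theorem corollary1p2:
  shows "\<exists>\<Lambda>. good_family \<Lambda> \<and>
    (\<forall>\<Lambda>'. good_family \<Lambda>' \<longrightarrow>
       (\<forall>M. is_matroid M \<longrightarrow> (\<forall>B\<in>bases M. \<Lambda>' M B = \<Lambda> M B)))"
proof (intro exI[of _ Lam] conjI allI impI ballI)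
  fix \<Lambda>' M B assume "good_family \<Lambda>'" "is_matroid M" "B \<in> bases M"
  then show "\<Lambda>' M B = Lam M B" using Lam_unique by blast
next
  show "good_family Lam"
    unfolding good_family_def
  proof (intro allI impI, rule conjI)
    fix M assume M: "is_matroid M"
    show "bij_betw (Lam M) (bases M) (S_lex M)"
      using Lam_good[OF M] Slex_eq[OF M] by simp
    show "ground M \<noteq> {} \<longrightarrow> (let m = Max (ground M) in \<forall>B\<in>bases M.
         Lam M B \<subseteq> B \<and>
         (m \<notin> B \<longrightarrow> Lam M B = Lam (deletion M m) B) \<and>
         (m \<in> B \<longrightarrow> Lam M B - {m} = Lam (contraction M m) (B - {m})))"
    proof (intro impI)
      assume ne: "ground M \<noteq> {}"
      have fE: "finite (ground M)" using M by (simp add: is_matroid_def)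
      define m where "m = Max (ground M)"
      have L: "Lam M B = (if m \<notin> B then Lam (deletion M m) B
        else (if insert m (Lam (contraction M m) (B - {m})) \<in> St (bases M)
              then insert m (Lam (contraction M m) (B - {m}))
              else Lam (contraction M m) (B - {m})))" for B
        using Lam_eq[OF fE ne m_def] .
      have "\<forall>B\<in>bases M. Lam M B \<subseteq> B \<and>
         (m \<notin> B \<longrightarrow> Lam M B = Lam (deletion M m) B) \<and>
         (m \<in> B \<longrightarrow> Lam M B - {m} = Lam (contraction M m) (B - {m}))"
      proof
        fix B assume B: "B \<in> bases M"
        have s: "Lam M B \<subseteq> B" using Lam_good[OF M] B by blast
        have c: "m \<in> B \<longrightarrow> Lam M B - {m} = Lam (contraction M m) (B - {m})"
        proof
          assume mB: "m \<in> B"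
          have cC: "B - {m} \<in> bases (contraction M m)"
            using B mB bases_con[of M m] by auto
          have "Lam (contraction M m) (B - {m}) \<subseteq> B - {m}"
            using Lam_good[OF matroid_con[OF M]] cC by blast
          then show "Lam M B - {m} = Lam (contraction M m) (B - {m})"
            using L[of B] mB by auto
        qed
        show "Lam M B \<subseteq> B \<and>
         (m \<notin> B \<longrightarrow> Lam M B = Lam (deletion M m) B) \<and>
         (m \<in> B \<longrightarrow> Lam M B - {m} = Lam (contraction M m) (B - {m}))"
          using s c L[of B] by simp
      qed
      then show "let m = Max (ground M) in \<forall>B\<in>bases M.
         Lam M B \<subseteq> B \<and>
         (m \<notin> B \<longrightarrow> Lam M B = Lam (deletion M m) B) \<and>
         (m \<in> B \<longrightarrow> Lam M B - {m} = Lam (contraction M m) (B - {m}))"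
        by (simp add: m_def Let_def)
    qed
  qed
qed

end
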